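(* Let ${\bf u}\in\mathcal A^{\mathbb N}$ have its language closed under reversal. If $D({\bf u})>0$, then either there exists a non-palindromic factor $q$ of ${\bf u}$ such that $\Gamma(q)$ contains a cycle, or there exists a palindromic factor $q$ of ${\bf u}$ such that $\Theta(q)$ contains a cycle. Moreover, if the empty word is the unique factor $q$ with this property, then there exists a letter having a non-palindromic complete return word in ${\bf u}$.
   Context: $\widetilde w$ is the reversal of $w$; $w$ is a palindrome if $w=\widetilde w$; the language is closed under reversal if the reversal of every factor is a factor. Palindromic defect: for a finite word $w$ of length $n$, $D(w)=n+1-$(number of distinct palindromic factors of $w$, including the empty word), and $D({\bf u})=\sup D(w)$ over factors of ${\bf u}$. With $E^+(w)=\{b: wb\text{ factor}\}$, $E^-(w)=\{a: aw\text{ factor}\}$, $E(w)=\{(a,b): awb\text{ factor}\}$: $\Gamma(w)$ is the bipartite graph on $(E^-(w)\times\{-1\})\cup(E^+(w)\times\{+1\})$ with edges $\{(a,-1),(b,+1)\}$ for $(a,b)\in E(w)$; for palindromic $w$, $\Theta(w)$ is the graph on $E^+(w)$ with edges $\{a,b\}$ for $(a,b)\in E(w)$, $a\ne b$. If $i<j$ are consecutive occurrences of a factor $w$ in ${\bf u}=u_0u_1\cdots$, the word $u_i\cdots u_{j+|w|-1}$ is a complete return word to $w$. *)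

theory Defs
  imports Main "HOL-Library.Extended_Nat" "HOL-Library.Sublist"
begin

definition occurs_at :: "(nat \<Rightarrow> 'a) \<Rightarrow> 'a list \<Rightarrow> nat \<Rightarrow> bool" where
  "occurs_at u w i \<longleftrightarrow> map u [i..<i + length w] = w"

definition is_factor :: "(nat \<Rightarrow> 'a) \<Rightarrow> 'a list \<Rightarrow> bool" where
  "is_factor u w \<longleftrightarrow> (\<exists>i. occurs_at u w i)"

definition palindrome :: "'a list \<Rightarrow> bool" where
  "palindrome w \<longleftrightarrow> rev w = w"

definition closed_under_reversal :: "(nat \<Rightarrow> 'a) \<Rightarrow> bool" where
  "closed_under_reversal u \<longleftrightarrow> (\<forall>w. is_factor u w \<longrightarrow> is_factor u (rev w))"

definition pal_defect_word :: "'a list \<Rightarrow> nat" where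
  "pal_defect_word w = length w + 1 - card {p. sublist p w \<and> palindrome p}"

definition pal_defect :: "(nat \<Rightarrow> 'a) \<Rightarrow> enat" where
  "pal_defect u = (SUP w \<in> {w. is_factor u w}. enat (pal_defect_word w))"

definition right_ext :: "(nat \<Rightarrow> 'a) \<Rightarrow> 'a list \<Rightarrow> 'a set" where
  "right_ext u w = {b. is_factor u (w @ [b])}"

definition left_ext :: "(nat \<Rightarrow> 'a) \<Rightarrow> 'a list \<Rightarrow> 'a set" where
  "left_ext u w = {a. is_factor u (a # w)}"

definition bi_ext :: "(nat \<Rightarrow> 'a) \<Rightarrow> 'a list \<Rightarrow> ('a \<times> 'a) set" where
  "bi_ext u w = {(a, b). is_factor u (a # w @ [b])}"

(* A simple undirected graph is a pair (vertex set, set of edges), edges being 2-element sets. *)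
type_synonym 'v ugraph = "'v set \<times> 'v set set"

definition has_cycle :: "'v ugraph \<Rightarrow> bool" where
  "has_cycle G \<longleftrightarrow> (\<exists>vs. length vs \<ge> 3 \<and> distinct vs \<and> set vs \<subseteq> fst G \<and>
      (\<forall>i < length vs. {vs ! i, vs ! ((i + 1) mod length vs)} \<in> snd G))"

(* bipartite graph Gamma(w); the sides are tagged by -1 and +1 *)
definition Gamma :: "(nat \<Rightarrow> 'a) \<Rightarrow> 'a list \<Rightarrow> ('a \<times> int) ugraph" where
  "Gamma u w = ((left_ext u w \<times> {-1}) \<union> (right_ext u w \<times> {1}),
                {{(a, -1), (b, 1)} | a b. (a, b) \<in> bi_ext u w})"

definition Theta :: "(nat \<Rightarrow> 'a) \<Rightarrow> 'a list \<Rightarrow> 'a ugraph" where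
  "Theta u w = (right_ext u w, {{a, b} | a b. (a, b) \<in> bi_ext u w \<and> a \<noteq> b})"

definition complete_return_word :: "(nat \<Rightarrow> 'a) \<Rightarrow> 'a list \<Rightarrow> 'a list \<Rightarrow> bool" where
  "complete_return_word u w r \<longleftrightarrow> (\<exists>i j. i < j \<and> occurs_at u w i \<and> occurs_at u w j \<and>
      (\<forall>k. i < k \<and> k < j \<longrightarrow> \<not> occurs_at u w k) \<and> r = map u [i..<j + length w])"

definition cycle_property :: "(nat \<Rightarrow> 'a) \<Rightarrow> 'a list \<Rightarrow> bool" where
  "cycle_property u q \<longleftrightarrow> is_factor u q \<and>
     ((\<not> palindrome q \<and> has_cycle (Gamma u q)) \<or> (palindrome q \<and> has_cycle (Theta u q)))"

end

theory Submission
  imports Defs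
begin

lemma successively_nth:
  "successively P xs \<Longrightarrow> Suc i < length xs \<Longrightarrow> P (xs!i) (xs!Suc i)"
proof (induction xs arbitrary: i)
  case Nil then show ?case by simp
next
  case (Cons x xs)
  then show ?case by (cases xs; cases i) (auto simp: successively_Cons)
qed

lemma rtranclp_spath:
  assumes "R\<^sup>*\<^sup>* a b"
  shows "\<exists>xs. xs \<noteq> [] \<and> hd xs = a \<and> last xs = b \<and> distinct xs \<and> successively R xs"
  using assms
proof (induction rule: converse_rtranclp_induct)
  case base
  then show ?case by (intro exI[of _ "[b]"]) auto
next
  case (step a a')
  then obtain xs where xs: "xs \<noteq> []" "hd xs = a'" "last xs = b" "distinct xs" "successively R xs" by blast
  show ?case
  proof (cases "a \<in> set xs")
    case True
    then obtain ys zs where yz: "xs = ys @ a # zs" by (meson split_list)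
    show ?thesis
      apply (intro exI[of _ "a # zs"])
      using xs yz by (auto simp: successively_append_iff)
  next
    case False
    show ?thesis
      apply (intro exI[of _ "a # xs"])
      using xs False step(1) by (cases xs) (auto simp: successively_Cons)
  qed
qed

lemma successively_rtranclp:
  "successively R xs \<Longrightarrow> xs \<noteq> [] \<Longrightarrow> R\<^sup>*\<^sup>* (hd xs) (last xs)"
proof (induction xs)
  case Nil then show ?case by simp
next
  case (Cons x xs)
  then show ?case
    by (cases xs) (auto simp: successively_Cons intro: converse_rtranclp_into_rtranclp)
qed

lemma graph_cycle:
  assumes E: "\<And>e. e \<in> Ed \<Longrightarrow> e \<subseteq> V"
    and ab: "{a,b} \<in> Ed" "a \<noteq> b"
    and path: "(\<lambda>x y. {x,y} \<in> Ed \<and> {x,y} \<noteq> {a,b})\<^sup>*\<^sup>* a b"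
  shows "has_cycle (V, Ed)"
proof -
  let ?R = "(\<lambda>x y. {x,y} \<in> Ed \<and> {x,y} \<noteq> {a,b})"
  obtain xs where xs: "xs \<noteq> []" "hd xs = a" "last xs = b" "distinct xs" "successively ?R xs"
    using rtranclp_spath[OF path] by blast
  have l2: "length xs \<ge> 2"
  proof (rule ccontr)
    assume "\<not> ?thesis"
    then have "length xs = 1" using xs(1) by (cases xs) (auto simp: not_less_eq_eq)
    then obtain c where "xs = [c]" by (metis length_Suc_conv length_0_conv One_nat_def)
    then show False using xs ab by auto
  qed
  have l3: "length xs \<ge> 3"
  proof (rule ccontr)
    assume "\<not> ?thesis"
    then have "length xs = 2" using l2 by auto
    then obtain c d where "xs = [c,d]" by (auto simp: numeral_2_eq_2 length_Suc_conv)
    then show False using xs ab by (auto simp: successively_Cons)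
  qed
  have edges: "\<forall>i < length xs. {xs ! i, xs ! ((i + 1) mod length xs)} \<in> Ed"
  proof (intro allI impI)
    fix i assume i: "i < length xs"
    show "{xs ! i, xs ! ((i + 1) mod length xs)} \<in> Ed"
    proof (cases "Suc i < length xs")
      case True
      then show ?thesis using successively_nth[OF xs(5) True] by simp
    next
      case False
      then have "i = length xs - 1" using i by auto
      then have "xs ! i = b" "xs ! ((i + 1) mod length xs) = a"
        using xs l2 by (auto simp: last_conv_nth hd_conv_nth)
      then show ?thesis using ab by (simp add: insert_commute)
    qed
  qed
  have "set xs \<subseteq> V"
  proof
    fix x assume "x \<in> set xs"
    then obtain i where i: "i < length xs" "xs ! i = x" by (auto simp: in_set_conv_nth)
    then show "x \<in> V" using edges E by blast
  qed
  then show ?thesis unfolding has_cycle_def using l3 xs edges by auto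
qed

lemma fresh_leaf:
  assumes "has_cycle (V, insert {a,c} Ed)" "c \<notin> \<Union>Ed" "a \<noteq> c"
  shows "has_cycle (V, Ed)"
proof -
  obtain vs where vs: "length vs \<ge> 3" "distinct vs" "set vs \<subseteq> V"
    "\<forall>i < length vs. {vs ! i, vs ! ((i + 1) mod length vs)} \<in> insert {a,c} Ed"
    using assms(1) unfolding has_cycle_def by auto
  let ?k = "length vs"
  show ?thesis
  proof (cases "c \<in> set vs")
    case False
    have "\<forall>i < ?k. {vs ! i, vs ! ((i + 1) mod ?k)} \<in> Ed"
    proof (intro allI impI)
      fix i assume i: "i < ?k"
      have "(i + 1) mod ?k < ?k" using vs(1) by (intro mod_less_divisor) linarith
      then have "vs ! i \<noteq> c" "vs ! ((i + 1) mod ?k) \<noteq> c" using False i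
        by (metis nth_mem)+
      then have "{vs ! i, vs ! ((i + 1) mod ?k)} \<noteq> {a,c}" by (metis doubleton_eq_iff)
      then show "{vs ! i, vs ! ((i + 1) mod ?k)} \<in> Ed" using vs(4) i by auto
    qed
    then show ?thesis unfolding has_cycle_def using vs by auto
  next
    case True
    then obtain i where i: "i < ?k" "vs ! i = c" by (auto simp: in_set_conv_nth)
    define p where "p = (if i = 0 then ?k - 1 else i - 1)"
    define n where "n = (if i = ?k - 1 then 0 else i + 1)"
    have pk: "p < ?k" "n < ?k" using vs(1) i by (auto simp: p_def n_def)
    have pn: "(p + 1) mod ?k = i" using i vs(1) by (auto simp: p_def)
    have nn: "(i + 1) mod ?k = n"
    proof (cases "i = ?k - 1")
      case True
      then have "i + 1 = ?k" using vs(1) by linarith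
      then show ?thesis by (simp add: n_def True)
    next
      case False
      then have "i + 1 < ?k" using i by linarith
      then show ?thesis by (simp add: n_def False)
    qed
    have e1: "{vs ! p, c} \<in> insert {a,c} Ed" using vs(4) pk pn i by metis
    have e2: "{c, vs ! n} \<in> insert {a,c} Ed" using vs(4) i nn by metis
    have "{vs ! p, c} = {a,c}" using e1 assms(2) by blast
    moreover have "{c, vs ! n} = {a,c}" using e2 assms(2) by blast
    moreover have "p \<noteq> i" "n \<noteq> i" using i vs(1) by (auto simp: p_def n_def)
    ultimately have "vs ! p = a" "vs ! n = a"
      using vs(2) pk i by (metis distinct_conv_nth doubleton_eq_iff)+
    then have "p = n" using vs(2) pk by (metis nth_eq_iff_index_eq)
    then show ?thesis using i vs(1) by (auto simp: p_def n_def split: if_splits)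
  qed
qed


definition cls :: "'a list \<Rightarrow> 'a list set" where
  "cls w = {w, rev w}"

definition ends :: "nat \<Rightarrow> 'a list set \<Rightarrow> 'a list set set" where
  "ends m X = (\<lambda>x. cls (take m x)) ` X"

definition Sg :: "(nat \<Rightarrow> 'a) \<Rightarrow> nat \<Rightarrow> 'a list set \<Rightarrow> 'a list set \<Rightarrow> 'a list set \<Rightarrow> bool" where
  "Sg u m E a b \<longleftrightarrow> (\<exists>f. is_factor u f \<and> length f = Suc m \<and> cls f \<noteq> E \<and> a \<noteq> b \<and> ends m (cls f) = {a,b})"

definition cycm :: "(nat \<Rightarrow> 'a) \<Rightarrow> nat \<Rightarrow> bool" where
  "cycm u m \<longleftrightarrow> (\<exists>e a b. is_factor u e \<and> length e = Suc m \<and> a \<noteq> b \<and> ends m (cls e) = {a,b}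
      \<and> (Sg u m (cls e))\<^sup>*\<^sup>* a b)"

lemma cls_rev[simp]: "cls (rev w) = cls w"
  unfolding cls_def by auto

lemma cls_eq_iff: "cls v = cls w \<longleftrightarrow> v = w \<or> v = rev w"
  unfolding cls_def by (auto simp: doubleton_eq_iff)

lemma ends_cls: "length x = Suc m \<Longrightarrow> ends m (cls x) = {cls (take m x), cls (drop 1 x)}"
  unfolding ends_def cls_def by (auto simp: take_rev)

lemma is_factor_iff: "is_factor u w \<longleftrightarrow> (\<exists>i. map u [i..<i+length w] = w)"
  unfolding is_factor_def occurs_at_def by simp

lemma factor_take: "is_factor u w \<Longrightarrow> is_factor u (take k w)"
  unfolding is_factor_iff
proof (elim exE)
  fix i assume h: "map u [i..<i + length w] = w"
  show "\<exists>j. map u [j..<j + length (take k w)] = take k w"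
  proof (cases "k \<le> length w")
    case True
    have "take k w = take k (map u [i..<i + length w])" using h by simp
    also have "\<dots> = map u [i..<i+k]" using True by (simp add: take_map)
    finally show ?thesis using True by (intro exI[of _ i]) simp
  next
    case False
    then show ?thesis using h by (intro exI[of _ i]) simp
  qed
qed

lemma factor_drop: "is_factor u w \<Longrightarrow> is_factor u (drop k w)"
  unfolding is_factor_iff
proof (elim exE)
  fix i assume h: "map u [i..<i + length w] = w"
  show "\<exists>j. map u [j..<j + length (drop k w)] = drop k w"
  proof (cases "k \<le> length w")
    case True
    have "drop k w = drop k (map u [i..<i + length w])" using h by simp
    also have "\<dots> = map u [i+k..<i+length w]" using True by (simp add: drop_map)
    finally show ?thesis using True by (intro exI[of _ "i+k"]) simp
  next
    case False
    then show ?thesis by simp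
  qed
qed

lemma factor_rev: "closed_under_reversal u \<Longrightarrow> is_factor u w \<Longrightarrow> is_factor u (rev w)"
  unfolding closed_under_reversal_def by blast

lemma map_upt_factor: "is_factor u (map u [a..<b])"
  unfolding is_factor_iff by (cases "a \<le> b") (auto intro!: exI[of _ a])

lemma step_edge:
  assumes "is_factor u f" "length f = Suc m" "cls f \<noteq> E"
  shows "(Sg u m E)\<^sup>*\<^sup>* (cls (take m f)) (cls (drop 1 f))"
proof (cases "cls (take m f) = cls (drop 1 f)")
  case True then show ?thesis by simp
next
  case False
  then have "Sg u m E (cls (take m f)) (cls (drop 1 f))"
    unfolding Sg_def using assms ends_cls[OF assms(2)] by blast
  then show ?thesis by simp
qed

lemma take_map_upt: "k \<le> l \<Longrightarrow> take k (map u [a..<a+l]) = map u [a..<a+k]"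
  by (simp add: take_map)
lemma drop_map_upt': "k \<le> l \<Longrightarrow> drop k (map u [a..<a+l]) = map u [a+k..<a+l]"
  by (simp add: drop_map)


lemma occurs_at_single: "occurs_at u [c] i \<longleftrightarrow> u i = c"
  by (auto simp: occurs_at_def)

lemma occurs_at_two: "occurs_at u [a,b] i \<longleftrightarrow> u i = a \<and> u (Suc i) = b"
proof -
  have "[i..<i + length [a,b]] = [i, Suc i]" by (simp add: upt_conv_Cons)
  then show ?thesis by (simp add: occurs_at_def)
qed
definition EdN :: "(nat \<Rightarrow> 'a) \<Rightarrow> nat \<Rightarrow> 'a set set" where
  "EdN u N = {{u t, u (Suc t)} | t. Suc t < N \<and> u t \<noteq> u (Suc t)}"

lemma EdN_mono: "N \<le> M \<Longrightarrow> EdN u N \<subseteq> EdN u M"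
proof
  fix e assume "N \<le> M" "e \<in> EdN u N"
  then obtain t where "e = {u t, u (Suc t)}" "Suc t < N" "u t \<noteq> u (Suc t)" unfolding EdN_def by blast
  then show "e \<in> EdN u M" unfolding EdN_def using \<open>N \<le> M\<close> by (intro CollectI exI[of _ t]) simp
qed

lemma EdN_Suc: "EdN u (Suc (Suc M)) = EdN u (Suc M) \<union> (if u M \<noteq> u (Suc M) then {{u M, u (Suc M)}} else {})"
  unfolding EdN_def by (auto simp: less_Suc_eq)

lemma EdN_01: "N \<le> 1 \<Longrightarrow> EdN u N = {}"
  unfolding EdN_def by auto

lemma no_cycle_empty: "\<not> has_cycle (V, {})"
proof
  assume "has_cycle (V, {})"
  then obtain vs where "length vs \<ge> 3" "\<forall>i < length vs. {vs ! i, vs ! ((i + 1) mod length vs)} \<in> ({}::'a set set)"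
    unfolding has_cycle_def by auto
  then show False by (metis empty_iff less_le_trans zero_less_numeral)
qed

lemma pal_nth: "palindrome r \<Longrightarrow> k < length r \<Longrightarrow> r ! k = r ! (length r - 1 - k)"
  unfolding palindrome_def using rev_nth[of k r] by simp

lemma EdN_acyclic:
  assumes H: "\<And>a r. complete_return_word u [a] r \<Longrightarrow> palindrome r"
  shows "\<not> has_cycle (V, EdN u N)"
proof (induction N)
  case 0 then show ?case using EdN_01[of 0 u] no_cycle_empty by simp
next
  case (Suc N)
  show ?case
  proof (cases N)
    case 0 then show ?thesis using EdN_01[of 1 u] no_cycle_empty by simp
  next
    case M: (Suc M)
  show ?thesis
  proof (cases "u M \<noteq> u (Suc M)")
    case False
    then show ?thesis using Suc.IH EdN_Suc[of u M] M by simp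
  next
    case True
    let ?a = "u M" and ?c = "u (Suc M)"
    show ?thesis
    proof (cases "\<exists>t \<le> M. u t = ?c")
      case True2: True
      define T where "T = Max {t. t \<le> M \<and> u t = ?c}"
      have fin: "finite {t. t \<le> M \<and> u t = ?c}" by simp
      have Tin: "T \<le> M" "u T = ?c" using Max_in[OF fin] True2 unfolding T_def by auto
      have Tmax: "\<And>k. k \<le> M \<Longrightarrow> u k = ?c \<Longrightarrow> k \<le> T" unfolding T_def using fin by auto
      have TM: "T < M" using Tin True by (metis le_neq_implies_less)
      define r where "r = map u [T..<Suc M + length [?c]]"
      have crw: "complete_return_word u [?c] r"
        unfolding complete_return_word_def
        apply (rule exI[of _ T], rule exI[of _ "Suc M"])
        using Tin TM Tmax by (auto simp: occurs_at_single r_def less_Suc_eq_le) (meson leD)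
      have pr: "palindrome r" using H crw by blast
      have lr: "length r = M - T + 2" using TM by (simp add: r_def)
      have "r ! 1 = r ! (length r - 1 - 1)" using pal_nth[OF pr, of 1] lr by simp
      moreover have "r ! 1 = u (Suc T)" using lr TM unfolding r_def by (subst nth_map_upt) auto
      moreover have "r ! (length r - 1 - 1) = u M" using lr TM
        unfolding lr unfolding r_def by (subst nth_map_upt) auto
      ultimately have uT: "u (Suc T) = ?a" by simp
      have "{?a, ?c} \<in> EdN u (Suc M)" unfolding EdN_def
        using TM Tin uT True by (auto intro!: exI[of _ T] simp: insert_commute)
      then have "EdN u (Suc (Suc M)) = EdN u (Suc M)" using EdN_Suc[of u M] True by auto
      then show ?thesis using Suc.IH M by simp
    next
      case False
      have "?c \<notin> \<Union>(EdN u (Suc M))"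
      proof
        assume "?c \<in> \<Union>(EdN u (Suc M))"
        then obtain t where "?c \<in> {u t, u (Suc t)}" "Suc t < Suc M" unfolding EdN_def by blast
        then show False using False by (metis Suc_lessD empty_iff insertE less_Suc_eq_le)
      qed
      then show ?thesis using fresh_leaf[of V ?a ?c "EdN u (Suc M)"] Suc.IH M True EdN_Suc[of u M]
        by auto
    qed
  qed
  qed
qed

lemma finite_EdN_cover:
  assumes "finite F" "\<forall>e\<in>F. \<exists>N. e \<in> EdN u N"
  shows "\<exists>N. F \<subseteq> EdN u N"
  using assms
proof (induction F rule: finite_induct)
  case empty then show ?case by auto
next
  case (insert x F)
  then obtain N1 N2 where "F \<subseteq> EdN u N1" "x \<in> EdN u N2" by auto
  then show ?case using EdN_mono[of N1 "max N1 N2" u] EdN_mono[of N2 "max N1 N2" u]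
    by (intro exI[of _ "max N1 N2"]) auto
qed

lemma letters_lemma:
  assumes "has_cycle (Theta u [])"
  shows "\<exists>a r. complete_return_word u [a] r \<and> \<not> palindrome r"
proof (rule ccontr)
  assume "\<not> ?thesis"
  then have H: "\<And>a r. complete_return_word u [a] r \<Longrightarrow> palindrome r" by blast
  obtain vs where vs: "length vs \<ge> 3" "distinct vs"
    "\<forall>i < length vs. {vs ! i, vs ! ((i + 1) mod length vs)} \<in> snd (Theta u [])"
    using assms unfolding has_cycle_def by auto
  let ?F = "(\<lambda>i. {vs ! i, vs ! ((i + 1) mod length vs)}) ` {..<length vs}"
  have "\<forall>e\<in>?F. \<exists>N. e \<in> EdN u N"
  proof
    fix e assume "e \<in> ?F"
    then have "e \<in> snd (Theta u [])" using vs(3) by auto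
    then obtain a b where ab: "e = {a,b}" "is_factor u [a,b]" "a \<noteq> b"
      unfolding Theta_def bi_ext_def by auto
    then obtain t where "u t = a" "u (Suc t) = b" unfolding is_factor_def
      using occurs_at_two by metis
    then show "\<exists>N. e \<in> EdN u N" unfolding EdN_def using ab
      by (intro exI[of _ "Suc (Suc t)"]) auto
  qed
  then obtain N where N: "?F \<subseteq> EdN u N" using finite_EdN_cover[of ?F u] by auto
  have "has_cycle (UNIV, EdN u N)" unfolding has_cycle_def
    using vs N by (intro exI[of _ vs]) auto
  moreover have "\<not> has_cycle (UNIV, EdN u N)" by (rule EdN_acyclic) (rule H)
  ultimately show False by blast
qed


definition pals :: "'a list \<Rightarrow> 'a list set" where
  "pals w = {p. sublist p w \<and> palindrome p}"

lemma finite_pals: "finite (pals w)"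
proof -
  have "pals w \<subseteq> set (sublists w)" unfolding pals_def by auto
  then show ?thesis by (rule finite_subset) simp
qed

lemma drop_map_upt: "d \<le> m \<Longrightarrow> drop d (map u [s..<s+m]) = map u [s+d..<s+m]"
  by (simp add: drop_map)


lemma pals_card_ge:
  assumes H: "\<And>P r. palindrome P \<Longrightarrow> complete_return_word u P r \<Longrightarrow> palindrome r"
  shows "card (pals (map u [s..<s+n])) \<ge> n + 1"
proof (induction n)
  case 0
  have "pals (map u [s..<s+0]) = {[]}" unfolding pals_def palindrome_def by auto
  then show ?case by simp
next
  case (Suc n)
  let ?w = "map u [s..<s+n]"
  let ?w' = "map u [s..<s+Suc n]"
  define M where "M = {k. k \<le> Suc n \<and> palindrome (drop (Suc n - k) ?w')}"
  have finM: "finite M" unfolding M_def by simp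
  have "drop n ?w' = [u (s+n)]" by (simp add: drop_map)
  then have oneM: "1 \<in> M" unfolding M_def palindrome_def by simp
  define K where "K = Max M"
  have KM: "K \<in> M" unfolding K_def using finM oneM Max_in by blast
  have Kmax: "\<And>k. k \<in> M \<Longrightarrow> k \<le> K" unfolding K_def using finM by simp
  have K1: "1 \<le> K" using Kmax oneM by simp
  have KSn: "K \<le> Suc n" using KM unfolding M_def by simp
  define p where "p = drop (Suc n - K) ?w'"
  have pp: "palindrome p" using KM unfolding M_def p_def by simp
  have p_eq: "p = map u [s + (Suc n - K)..<s+Suc n]" unfolding p_def
    using drop_map_upt[of "Suc n - K" "Suc n" u s] by simp
  have lp: "length p = K" using p_eq KSn K1 by simp
  define j where "j = s + (Suc n - K)"
  have occj: "occurs_at u p j" unfolding p_eq j_def occurs_at_def using KSn by simp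
  have pnot: "p \<notin> pals ?w"
  proof
    assume "p \<in> pals ?w"
    then have "sublist p ?w" unfolding pals_def by simp
    then obtain ps ss where split: "?w = ps @ p @ ss" unfolding sublist_def by blast
    define i0 where "i0 = length ps"
    have i0K: "i0 + K \<le> n" using arg_cong[OF split, of length] lp unfolding i0_def by simp
    have "p = take K (drop i0 ?w)" using split lp unfolding i0_def by simp
    also have "\<dots> = map u [s+i0..<s+i0+K]" using i0K
      by (simp add: drop_map take_map)
    finally have occ0: "occurs_at u p (s+i0)" unfolding occurs_at_def using lp by simp
    define Oc where "Oc = {t. s \<le> t \<and> t < j \<and> occurs_at u p t}"
    have finOc: "finite Oc" unfolding Oc_def by simp
    have in0: "s + i0 \<in> Oc" unfolding Oc_def j_def using occ0 i0K by simp
    define i1 where "i1 = Max Oc"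
    have i1Oc: "i1 \<in> Oc" unfolding i1_def using finOc in0 Max_in by blast
    have i1max: "\<And>t. t \<in> Oc \<Longrightarrow> t \<le> i1" unfolding i1_def using finOc by simp
    define r where "r = map u [i1..<j + length p]"
    have crw: "complete_return_word u p r"
      unfolding complete_return_word_def r_def
      apply (rule exI[of _ i1], rule exI[of _ j])
      using i1Oc i1max occj unfolding Oc_def by (auto, meson leD less_imp_le_nat order.strict_trans1)
    have pr: "palindrome r" using H[OF pp crw] .
    have jK: "j + length p = s + Suc n" unfolding j_def lp using KSn by simp
    have i1s: "s \<le> i1" "i1 - s \<le> Suc n" using i1Oc unfolding Oc_def j_def by auto
    have r_eq: "r = drop (i1 - s) ?w'" unfolding r_def jK
      using drop_map_upt[of "i1 - s" "Suc n" u s] i1s by (simp del: upt_Suc)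
    have lr: "length r = s + Suc n - i1" unfolding r_def jK by (simp del: upt_Suc)
    have "Suc n - (s + Suc n - i1) = i1 - s" using i1Oc unfolding Oc_def j_def by auto
    then have "length r \<in> M" unfolding M_def using pr r_eq lr i1Oc unfolding Oc_def j_def by auto
    then have "length r \<le> K" using Kmax by simp
    moreover have "length r > K" using lr i1Oc unfolding Oc_def j_def using KSn by auto
    ultimately show False by simp
  qed
  have sub: "sublist ?w ?w'" by simp
  have "pals ?w \<subseteq> pals ?w'" unfolding pals_def using sub sublist_order.order.trans by blast
  moreover have "p \<in> pals ?w'" unfolding pals_def using pp unfolding p_def
    by (simp only: mem_Collect_eq sublist_drop simp_thms)
  ultimately have "insert p (pals ?w) \<subseteq> pals ?w'" by simp
  then have "card (insert p (pals ?w)) \<le> card (pals ?w')" using finite_pals card_mono by blast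
  moreover have "card (insert p (pals ?w)) = Suc (card (pals ?w))"
    by (rule card_insert_disjoint[OF finite_pals pnot])
  ultimately have "Suc (card (pals ?w)) \<le> card (pals ?w')" by linarith
  then show ?case using Suc.IH by simp
qed

lemma step1:
  assumes "pal_defect u > 0"
  shows "\<exists>P r. palindrome P \<and> complete_return_word u P r \<and> \<not> palindrome r"
proof (rule ccontr)
  assume "\<not> ?thesis"
  then have H: "\<And>P r. palindrome P \<Longrightarrow> complete_return_word u P r \<Longrightarrow> palindrome r" by blast
  have "\<forall>w \<in> {w. is_factor u w}. enat (pal_defect_word w) \<le> 0"
  proof
    fix w assume "w \<in> {w. is_factor u w}"
    then obtain s where "map u [s..<s+length w] = w" unfolding is_factor_def occurs_at_def by auto
    moreover have "card (pals (map u [s..<s+length w])) \<ge> length w + 1"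
      by (rule pals_card_ge) (rule H)
    ultimately have "card (pals w) \<ge> length w + 1" by simp
    then show "enat (pal_defect_word w) \<le> 0" unfolding pal_defect_word_def pals_def[symmetric] by (simp add: zero_enat_def)
  qed
  then have "pal_defect u \<le> 0" unfolding pal_defect_def by (intro SUP_least) blast
  then show False using assms by simp
qed


lemma occurs_at_nth:
  assumes "occurs_at u P k" "t < length P" shows "u (k + t) = P ! t"
proof -
  have "P ! t = map u [k..<k+length P] ! t" using assms(1) unfolding occurs_at_def by simp
  also have "\<dots> = u (k + t)" using assms(2) by simp
  finally show ?thesis by simp
qed

lemma step2:
  fixes u :: "nat \<Rightarrow> 'a"
  assumes pP: "palindrome P" and crw: "complete_return_word u P r" and npr: "\<not> palindrome r"
  shows "\<exists>l. cycm u l"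
proof -
  let ?p = "length P"
  obtain i j where ij: "i < j" "occurs_at u P i" "occurs_at u P j"
    "\<And>k. i < k \<Longrightarrow> k < j \<Longrightarrow> \<not> occurs_at u P k" and r_def: "r = map u [i..<j + ?p]"
    using crw unfolding complete_return_word_def by blast
  have Pne: "P \<noteq> []"
  proof
    assume P0: "P = []"
    then have "\<And>k. occurs_at u P k" unfolding occurs_at_def by simp
    then have "\<not> Suc i < j" using ij(4)[of "Suc i"] by auto
    then have "j = Suc i" using ij(1) by simp
    then have "r = [u i]" using r_def P0 by simp
    then show False using npr unfolding palindrome_def by simp
  qed
  then have p1: "1 \<le> ?p" by (cases P) auto
  define n where "n = j + ?p - i"
  have lr: "length r = n" unfolding r_def n_def by simp
  define U where "U t = u (i + t)" for t
  have rnth: "\<And>t. t < n \<Longrightarrow> r ! t = U t" unfolding r_def U_def n_def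
    by (simp add: nth_map_upt)
  have jn: "j = i + n - ?p" "i + n = j + ?p" unfolding n_def using ij(1) by auto
  define Mm where "Mm = {k. k < n \<and> U k \<noteq> U (n - 1 - k)}"
  have "Mm \<noteq> {}"
  proof
    assume Mm0: "Mm = {}"
    have "rev r = r"
    proof (rule nth_equalityI)
      show "length (rev r) = length r" by simp
      fix k assume k: "k < length (rev r)"
      then have k': "k < n" using lr by simp
      have "rev r ! k = r ! (n - 1 - k)" using k lr by (simp add: rev_nth)
      also have "\<dots> = U (n - 1 - k)" using k' by (intro rnth) auto
      also have "\<dots> = U k"
      proof -
        have "k \<notin> Mm" using Mm0 by simp
        then show ?thesis using k' unfolding Mm_def by simp
      qed
      also have "\<dots> = r ! k" using rnth k' by simp
      finally show "rev r ! k = r ! k" .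
    qed
    then show False using npr unfolding palindrome_def by simp
  qed
  then obtain kk where "kk \<in> Mm" by blast
  define l where "l = (LEAST k. k \<in> Mm)"
  have lM: "l \<in> Mm" unfolding l_def using \<open>kk \<in> Mm\<close> by (rule LeastI)
  have lmin: "\<And>t. t < l \<Longrightarrow> U t = U (n - 1 - t)"
  proof -
    fix t assume t: "t < l"
    then have "t \<notin> Mm" unfolding l_def using not_less_Least by blast
    moreover have "t < n" using t lM unfolding Mm_def by auto
    ultimately show "U t = U (n - 1 - t)" unfolding Mm_def by auto
  qed
  have lne: "U l \<noteq> U (n - 1 - l)" "l < n" using lM unfolding Mm_def by auto
  have l2: "2 * l + 2 \<le> n"
  proof -
    have "n - 1 - l \<in> Mm" using lne unfolding Mm_def
      by (auto simp: Suc_diff_Suc)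
    then have "l \<le> n - 1 - l" unfolding l_def by (rule Least_le)
    moreover have "l \<noteq> n - 1 - l" using lne by metis
    ultimately show ?thesis using lne by linarith
  qed
  have pl: "?p \<le> l"
  proof (rule ccontr)
    assume "\<not> ?thesis"
    then have lp: "l < ?p" by simp
    have "U l = P ! l" unfolding U_def using occurs_at_nth[OF ij(2) lp] .
    moreover have "U (n - 1 - l) = P ! (?p - 1 - l)"
    proof -
      have "i + (n - 1 - l) = j + (?p - 1 - l)" using jn lp l2 by linarith
      then show ?thesis unfolding U_def using occurs_at_nth[OF ij(3), of "?p - 1 - l"] lp by simp
    qed
    moreover have "P ! (?p - 1 - l) = P ! l"
    proof -
      have "rev P ! l = P ! (?p - Suc l)" using lp by (rule rev_nth)
      then show ?thesis using pP unfolding palindrome_def by simp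
    qed
    ultimately show False using lne by simp
  qed
  define g where "g t = map u [i+t..<i+t+l]" for t
  define e where "e t = map u [i+t..<i+t+Suc l]" for t
  have lg: "\<And>t. length (g t) = l" unfolding g_def by simp
  have le: "\<And>t. length (e t) = Suc l" unfolding e_def by simp
  have eg1: "\<And>t. take l (e t) = g t" unfolding e_def g_def
    using take_map_upt[of l "Suc l" u] by (simp add: add.assoc)
  have eg2: "\<And>t. drop 1 (e t) = g (Suc t)" unfolding e_def g_def
    using drop_map_upt'[of 1 "Suc l" u] by simp
  have interior: "\<And>k. i < k \<Longrightarrow> k < i + n - ?p \<Longrightarrow> \<not> occurs_at u P k" using ij(4) jn(1) by simp
  have occ_take: "\<And>s. take ?p (g s) = P \<Longrightarrow> occurs_at u P (i+s)"
    unfolding g_def occurs_at_def using pl by (simp add: take_map_upt)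
  have occ_drop: "\<And>s. drop (l - ?p) (g s) = P \<Longrightarrow> occurs_at u P (i+s+(l-?p))"
  proof -
    fix s assume h: "drop (l - ?p) (g s) = P"
    have "drop (l - ?p) (g s) = map u [i+s+(l-?p)..<i+s+l]" unfolding g_def
      using drop_map_upt'[of "l - ?p" l u "i+s"] by simp
    moreover have "i+s+(l-?p) + ?p = i+s+l" using pl by simp
    ultimately show "occurs_at u P (i+s+(l-?p))" using h unfolding occurs_at_def by simp
  qed
  have tg0: "take ?p (g 0) = P" using occ_take ij(2) unfolding g_def occurs_at_def
    using pl by (simp add: take_map_upt)
  have drg0: "drop (l - ?p) (rev (g 0)) = P"
    using tg0 pP pl lg[of 0] unfolding palindrome_def by (simp add: drop_rev)
  have g01: "cls (g 0) \<noteq> cls (g 1)"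
  proof
    assume "cls (g 0) = cls (g 1)"
    then have "g 1 = g 0 \<or> g 1 = rev (g 0)" by (auto simp: cls_eq_iff)
    then show False
    proof
      assume "g 1 = g 0"
      then have "occurs_at u P (i+1)" using occ_take tg0 by metis
      then show False using interior[of "i+1"] l2 pl p1 by linarith
    next
      assume "g 1 = rev (g 0)"
      then have "occurs_at u P (i+1+(l-?p))" using occ_drop drg0 by metis
      then show False using interior[of "i+1+(l-?p)"] l2 pl p1 by linarith
    qed
  qed
  have gend: "g (n - l) = rev (g 0)"
  proof (rule nth_equalityI)
    show "length (g (n - l)) = length (rev (g 0))" using lg by simp
    fix t assume "t < length (g (n - l))"
    then have t: "t < l" using lg by simp
    have "g (n - l) ! t = U (n - l + t)" unfolding g_def U_def using t by (simp add: add.assoc)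
    also have "\<dots> = U (n - 1 - (l - 1 - t))"
    proof -
      have "n - l + t = n - 1 - (l - 1 - t)" using t l2 by arith
      then show ?thesis by simp
    qed
    also have "\<dots> = U (l - 1 - t)" using lmin[of "l - 1 - t"] t by simp
    also have "\<dots> = rev (g 0) ! t" unfolding g_def U_def using t by (simp add: rev_nth)
    finally show "g (n - l) ! t = rev (g 0) ! t" .
  qed
  have edges: "\<And>t. 1 \<le> t \<Longrightarrow> t \<le> n - l - 1 \<Longrightarrow> cls (e t) \<noteq> cls (e 0)"
  proof
    fix t assume t: "1 \<le> t" "t \<le> n - l - 1" and eq: "cls (e t) = cls (e 0)"
    then have "e t = e 0 \<or> e t = rev (e 0)" by (auto simp: cls_eq_iff)
    then show False
    proof
      assume "e t = e 0"
      then have "g t = g 0" using eg1 by metis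
      then have "occurs_at u P (i+t)" using occ_take tg0 by metis
      then show False using interior[of "i+t"] t l2 pl by linarith
    next
      assume et: "e t = rev (e 0)"
      have "g (Suc t) = drop 1 (e t)" using eg2 by simp
      also have "\<dots> = drop 1 (rev (e 0))" using et by simp
      also have "\<dots> = rev (take l (e 0))" using le[of 0] by (simp add: drop_rev)
      also have "\<dots> = rev (g 0)" using eg1 by simp
      finally have "g (Suc t) = rev (g 0)" .
      then have occ: "occurs_at u P (i+Suc t+(l-?p))" using occ_drop drg0 by metis
      show False
      proof (cases "Suc t + l < n")
        case True
        then show False using interior[of "i+Suc t+(l-?p)"] occ t pl by linarith
      next
        case False
        then have tt: "t = n - l - 1" using t by linarith
        have "hd (e t) = U t" unfolding e_def U_def by (simp add: upt_rec)
        moreover have "hd (rev (e 0)) = U l" unfolding e_def U_def by (simp add: hd_rev)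
        moreover have "U t = U (n - 1 - l)" using tt by (simp add: diff_diff_add add.commute)
        ultimately show False using et lne(1) by simp
      qed
    qed
  qed
  have fac: "\<And>t. is_factor u (e t)" unfolding e_def by (rule map_upt_factor)
  have path: "\<And>t. 1 \<le> t \<Longrightarrow> t \<le> n - l \<Longrightarrow> (Sg u l (cls (e 0)))\<^sup>*\<^sup>* (cls (g 1)) (cls (g t))"
  proof -
    fix t assume "1 \<le> t" "t \<le> n - l"
    then show "(Sg u l (cls (e 0)))\<^sup>*\<^sup>* (cls (g 1)) (cls (g t))"
    proof (induction t)
      case 0 then show ?case by simp
    next
      case (Suc t)
      show ?case
      proof (cases "t = 0")
        case True then show ?thesis by simp
      next
        case False
        then have IH: "(Sg u l (cls (e 0)))\<^sup>*\<^sup>* (cls (g 1)) (cls (g t))" using Suc by simp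
        have "cls (e t) \<noteq> cls (e 0)" using edges[of t] False Suc.prems by simp
        then have "(Sg u l (cls (e 0)))\<^sup>*\<^sup>* (cls (take l (e t))) (cls (drop 1 (e t)))"
          using step_edge[OF fac le] by blast
        then have "(Sg u l (cls (e 0)))\<^sup>*\<^sup>* (cls (g t)) (cls (g (Suc t)))" using eg1 eg2 by simp
        then show ?thesis using rtranclp_trans[OF IH] by blast
      qed
    qed
  qed
  have "(Sg u l (cls (e 0)))\<^sup>*\<^sup>* (cls (g 1)) (cls (g 0))"
    using path[of "n - l"] l2 gend by simp
  moreover have "ends l (cls (e 0)) = {cls (g 1), cls (g 0)}"
    using ends_cls[OF le] eg1 eg2 by (simp add: insert_commute)
  ultimately have "cycm u l" unfolding cycm_def using fac le g01
    by (intro exI[of _ "e 0"] exI[of _ "cls (g 1)"] exI[of _ "cls (g 0)"]) auto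
  then show ?thesis by blast
qed


definition SWg :: "(nat \<Rightarrow> 'a) \<Rightarrow> nat \<Rightarrow> 'a list set \<Rightarrow> 'a list set \<Rightarrow> 'a list set \<Rightarrow> 'a list set \<Rightarrow> bool" where
  "SWg u m E W X Y \<longleftrightarrow> (\<exists>f. is_factor u f \<and> length f = Suc (Suc m) \<and> cls f \<noteq> E \<and> X \<noteq> Y
      \<and> ends (Suc m) (cls f) = {X,Y} \<and> cls (take m (drop 1 f)) = W)"

lemma decomp: "length e = Suc (Suc m) \<Longrightarrow> e = hd e # take m (drop 1 e) @ [last e]"
proof -
  assume l: "length e = Suc (Suc m)"
  then obtain a e' where e: "e = a # e'" by (cases e) auto
  then have l': "length e' = Suc m" using l by simp
  then have ne: "e' \<noteq> []" by auto
  have "e' = butlast e' @ [last e']" using ne by simp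
  moreover have "butlast e' = take m e'" using l' by (simp add: butlast_conv_take)
  ultimately have "e' = take m e' @ [last e']" by simp
  moreover have "last e = last e'" using e ne by simp
  ultimately show ?thesis using e by simp
qed

lemma ends_word: "length w = m \<Longrightarrow> ends (Suc m) (cls (x # w @ [y])) = {cls (x # w), cls (w @ [y])}"
  by (subst ends_cls) auto

lemma cls_pal_snoc: "rev w = w \<Longrightarrow> cls (w @ [y]) = cls (y # w)"
  unfolding cls_def by auto

lemma inj_left:
  assumes "w \<noteq> []" "cls (x # w) = cls (x' # w)" shows "x = x'"
proof -
  have "x # w = x' # w \<or> x # w = rev w @ [x']" using assms(2) by (auto simp: cls_eq_iff)
  then show ?thesis
  proof
    assume h: "x # w = rev w @ [x']"
    then have "last (x # w) = x'" by simp
    then have "last w = x'" using assms(1) by simp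
    moreover have "hd (rev w @ [x']) = x" using h by (metis list.sel(1))
    then have "last w = x" using assms(1) by (simp add: hd_rev)
    ultimately show ?thesis by simp
  qed simp
qed

lemma inj_right:
  assumes "w \<noteq> []" "cls (w @ [y]) = cls (w @ [y'])" shows "y = y'"
proof -
  have "w @ [y] = w @ [y'] \<or> w @ [y] = y' # rev w" using assms(2) by (auto simp: cls_eq_iff)
  then show ?thesis
  proof
    assume h: "w @ [y] = y' # rev w"
    then have "hd (w @ [y]) = y'" by simp
    then have "hd w = y'" using assms(1) by simp
    moreover have "last (y' # rev w) = y" using h by (metis last_snoc)
    then have "hd w = y" using assms(1) by (simp add: last_rev)
    ultimately show ?thesis by simp
  qed simp
qed

lemma rep_const: "x # w = w @ [y] \<Longrightarrow> rev w = w"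
proof -
  assume h: "x # w = w @ [y]"
  have all: "\<forall>k < length w. w ! k = x"
  proof (intro allI impI)
    fix k assume "k < length w"
    then show "w ! k = x"
    proof (induction k)
      case 0
      have "(x # w) ! 0 = (w @ [y]) ! 0" using h by simp
      then show ?case using 0 by (simp add: nth_append)
    next
      case (Suc k)
      have "(x # w) ! Suc k = (w @ [y]) ! Suc k" using h by simp
      then have "w ! k = w ! Suc k" using Suc.prems by (simp add: nth_append)
      then show ?case using Suc by simp
    qed
  qed
  then have "w = replicate (length w) x" by (simp add: list_eq_iff_nth_eq)
  then show ?thesis by (metis rev_replicate)
qed

lemma inj_mixed:
  assumes "rev w \<noteq> w" shows "cls (x # w) \<noteq> cls (w @ [y])"
proof
  assume "cls (x # w) = cls (w @ [y])"
  then have "x # w = w @ [y] \<or> x # w = y # rev w" by (auto simp: cls_eq_iff)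
  then show False using assms rep_const by fastforce
qed

lemma pivot_in_ends:
  assumes "length f = Suc (Suc m)" "X \<in> ends (Suc m) (cls f)"
  shows "cls (take m (drop 1 f)) \<in> ends m X"
proof -
  have "X = cls (take (Suc m) f) \<or> X = cls (drop 1 f)" using assms ends_cls[OF assms(1)] by auto
  then show ?thesis
  proof
    assume X: "X = cls (take (Suc m) f)"
    have "ends m X = {cls (take m (take (Suc m) f)), cls (drop 1 (take (Suc m) f))}"
      unfolding X using assms(1) by (intro ends_cls) simp
    moreover have "drop 1 (take (Suc m) f) = take m (drop 1 f)" by (simp add: drop_take)
    ultimately show ?thesis by simp
  next
    assume X: "X = cls (drop 1 f)"
    have "ends m X = {cls (take m (drop 1 f)), cls (drop 1 (drop 1 f))}"
      unfolding X using assms(1) by (intro ends_cls) simp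
    then show ?thesis by simp
  qed
qed

lemma vertex_word:
  assumes "is_factor u f" "length f = Suc (Suc m)" "X \<in> ends (Suc m) (cls f)"
  shows "\<exists>x. X = cls x \<and> is_factor u x \<and> length x = Suc m"
proof -
  have "X = cls (take (Suc m) f) \<or> X = cls (drop 1 f)" using assms ends_cls[OF assms(2)] by auto
  then show ?thesis
  proof
    assume "X = cls (take (Suc m) f)"
    then show ?thesis using assms(2) factor_take[OF assms(1)] by (intro exI[of _ "take (Suc m) f"]) simp
  next
    assume "X = cls (drop 1 f)"
    then show ?thesis using assms(2) factor_drop[OF assms(1)] by (intro exI[of _ "drop 1 f"]) simp
  qed
qed

lemma good:
  assumes "is_factor u z" "length z = Suc m" "cls z \<noteq> X"
    "c \<in> ends m (cls z)" "(Sg u m X)\<^sup>*\<^sup>* W1 c" "c' \<in> ends m (cls z)"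
  shows "(Sg u m X)\<^sup>*\<^sup>* W1 c'"
proof (cases "c = c'")
  case True then show ?thesis using assms by simp
next
  case False
  have e: "ends m (cls z) = {cls (take m z), cls (drop 1 z)}" using ends_cls[OF assms(2)] .
  then have "ends m (cls z) = {c, c'}" using assms(4,6) False by auto
  then have "Sg u m X c c'" unfolding Sg_def using assms False by blast
  then show ?thesis using assms(5) by (meson rtranclp.rtrancl_into_rtrancl)
qed

lemma reach:
  assumes "successively (Sg u (Suc m) E0) ys" "ys \<noteq> []" "\<forall>Z\<in>set ys. Z \<noteq> X"
    "\<forall>c\<in>ends m (hd ys). (Sg u m X)\<^sup>*\<^sup>* W1 c"
  shows "\<forall>c\<in>ends m (last ys). (Sg u m X)\<^sup>*\<^sup>* W1 c"
  using assms
proof (induction ys rule: induct_list012)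
  case 1 then show ?case by simp
next
  case (2 x) then show ?case by simp
next
  case (3 Z Z' rest)
  have s: "Sg u (Suc m) E0 Z Z'" using "3.prems"(1) by simp
  then obtain f where f: "is_factor u f" "length f = Suc (Suc m)" "ends (Suc m) (cls f) = {Z, Z'}"
    unfolding Sg_def by blast
  let ?p = "cls (take m (drop 1 f))"
  have pZ: "?p \<in> ends m Z" "?p \<in> ends m Z'" using pivot_in_ends[OF f(2)] f(3) by auto
  have Rp: "(Sg u m X)\<^sup>*\<^sup>* W1 ?p" using "3.prems"(4) pZ(1) by simp
  obtain z' where z': "Z' = cls z'" "is_factor u z'" "length z' = Suc m"
    using vertex_word[OF f(1,2)] f(3) by blast
  have "Z' \<noteq> X" using "3.prems"(3) by simp
  then have "\<forall>c\<in>ends m Z'. (Sg u m X)\<^sup>*\<^sup>* W1 c"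
    using good[OF z'(2,3)] z'(1) pZ(2) Rp by blast
  then show ?case using "3.IH" "3.prems" by simp
qed

lemma successively_split:
  assumes "successively P xs" "\<not> successively Q xs"
  shows "\<exists>ys X Y zs. xs = ys @ X # Y # zs \<and> successively Q (ys @ [X]) \<and> P X Y \<and> \<not> Q X Y"
  using assms
proof (induction xs rule: induct_list012)
  case 1 then show ?case by simp
next
  case (2 x) then show ?case by simp
next
  case (3 a b rest)
  show ?case
  proof (cases "Q a b")
    case False
    then show ?thesis using "3.prems" by (intro exI[of _ "[]"]) auto
  next
    case True
    then have "\<not> successively Q (b # rest)" using "3.prems"(2) by simp
    moreover have "successively P (b # rest)" using "3.prems"(1) by simp
    ultimately obtain ys X Y zs where h: "b # rest = ys @ X # Y # zs" "successively Q (ys @ [X])"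
      "P X Y" "\<not> Q X Y" using "3.IH" by blast
    have "hd (ys @ [X]) = b" using h(1) by (cases ys) auto
    then have "successively Q (a # ys @ [X])" using h(2) True by (simp add: successively_Cons)
    then show ?thesis using h by (intro exI[of _ "a # ys"]) auto
  qed
qed


lemma normalize_np:
  assumes clo: "closed_under_reversal u" and f: "is_factor u f" "length f = Suc (Suc m)"
    and piv: "cls (take m (drop 1 f)) = cls w0"
  shows "\<exists>x y. is_factor u (x # w0 @ [y]) \<and> cls f = cls (x # w0 @ [y])"
proof -
  let ?mid = "take m (drop 1 f)"
  have fd: "f = hd f # ?mid @ [last f]" using decomp[OF f(2)] .
  have "?mid = w0 \<or> ?mid = rev w0" using piv by (auto simp: cls_eq_iff)
  then show ?thesis
  proof
    assume "?mid = w0"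
    then show ?thesis using f(1) fd by (metis)
  next
    assume h: "?mid = rev w0"
    have "rev f = last f # w0 @ [hd f]" using fd h by (metis rev.simps(2) rev_append rev_rev_ident append_Cons append_Nil rev_singleton_conv append.assoc)
    moreover have "is_factor u (rev f)" using factor_rev[OF clo f(1)] .
    ultimately show ?thesis by (metis cls_rev)
  qed
qed

lemma loc_nonpal:
  fixes u :: "nat \<Rightarrow> 'a"
  assumes clo: "closed_under_reversal u" and e0: "is_factor u e0" "length e0 = Suc (Suc m)"
    and AB: "A \<noteq> B" "ends (Suc m) (cls e0) = {A,B}"
    and path: "(SWg u m (cls e0) (cls (take m (drop 1 e0))))\<^sup>*\<^sup>* A B"
    and np: "\<not> palindrome (take m (drop 1 e0))"
  shows "has_cycle (Gamma u (take m (drop 1 e0)))"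
proof -
  define w0 where "w0 = take m (drop 1 e0)"
  have lw0: "length w0 = m" unfolding w0_def using e0(2) by simp
  have npw: "rev w0 \<noteq> w0" using np unfolding w0_def palindrome_def by simp
  then have wne: "w0 \<noteq> []" by auto
  define x0 where "x0 = hd e0"
  define y0 where "y0 = last e0"
  have e0d: "e0 = x0 # w0 @ [y0]" unfolding x0_def y0_def w0_def using decomp[OF e0(2)] .
  define V where "V = fst (Gamma u w0)"
  define Ed where "Ed = snd (Gamma u w0)"
  define gv where "gv p = (if snd p = (-1::int) then cls (fst p # w0) else cls (w0 @ [fst p]))" for p :: "'a \<times> int"
  have V_def': "V = (left_ext u w0 \<times> {-1}) \<union> (right_ext u w0 \<times> {1})" unfolding V_def Gamma_def by simp
  have Ed_def': "Ed = {{(a, -1), (b, 1)} | a b. (a, b) \<in> bi_ext u w0}" unfolding Ed_def Gamma_def by simp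
  have gv_inj: "\<And>p q. p \<in> V \<Longrightarrow> q \<in> V \<Longrightarrow> gv p = gv q \<Longrightarrow> p = q"
  proof -
    fix p q assume pq: "p \<in> V" "q \<in> V" "gv p = gv q"
    obtain a s where p: "p = (a, s)" "s = -1 \<or> s = 1" using pq(1) unfolding V_def' by auto
    obtain b t where q: "q = (b, t)" "t = -1 \<or> t = 1" using pq(2) unfolding V_def' by auto
    show "p = q" using p q pq(3) inj_left[OF wne] inj_right[OF wne] inj_mixed[OF npw]
      unfolding gv_def by (auto split: if_splits) (metis inj_mixed npw)+
  qed
  have facts_word: "\<And>x y. is_factor u (x # w0 @ [y]) \<Longrightarrow> (x, -1) \<in> V \<and> (y, 1) \<in> V \<and> {(x,-1),(y,1)} \<in> Ed"
  proof -
    fix x y assume h: "is_factor u (x # w0 @ [y])"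
    have "is_factor u (x # w0)" using factor_take[OF h, of "Suc m"] lw0 by simp
    moreover have "is_factor u (w0 @ [y])" using factor_drop[OF h, of 1] by simp
    ultimately show "(x, -1) \<in> V \<and> (y, 1) \<in> V \<and> {(x,-1),(y,1)} \<in> Ed"
      using h unfolding V_def' Ed_def' left_ext_def right_ext_def bi_ext_def by auto
  qed
  have ends_w: "\<And>x y. ends (Suc m) (cls (x # w0 @ [y])) = {gv (x,-1), gv (y,1)}"
    unfolding gv_def using ends_word[OF lw0] by simp
  have p0: "(x0,-1) \<in> V" "(y0,1) \<in> V" "{(x0,-1),(y0,1)} \<in> Ed" using facts_word e0(1) e0d by metis+
  have AB': "{A,B} = {gv (x0,-1), gv (y0,1)}" using AB(2) ends_w e0d by metis
  obtain vA vB where vAB: "A = gv vA" "B = gv vB" "{vA, vB} = {(x0,-1),(y0,1)}"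
    using AB' by (metis doubleton_eq_iff)
  have vV: "vA \<in> V" "vB \<in> V" using vAB(3) p0 by (auto simp: doubleton_eq_iff)
  have vne: "vA \<noteq> vB" using vAB AB(1) by auto
  let ?R = "\<lambda>v v'. {v,v'} \<in> Ed \<and> {v,v'} \<noteq> {vA,vB}"
  have inv: "\<And>Z. (SWg u m (cls e0) (cls w0))\<^sup>*\<^sup>* A Z \<Longrightarrow> \<exists>v\<in>V. Z = gv v \<and> ?R\<^sup>*\<^sup>* vA v"
  proof -
    fix Z assume "(SWg u m (cls e0) (cls w0))\<^sup>*\<^sup>* A Z"
    then show "\<exists>v\<in>V. Z = gv v \<and> ?R\<^sup>*\<^sup>* vA v"
    proof (induction rule: rtranclp_induct)
      case base then show ?case using vAB vV by auto
    next
      case (step Z Z')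
      then obtain v where v: "v \<in> V" "Z = gv v" "?R\<^sup>*\<^sup>* vA v" by blast
      obtain f where f: "is_factor u f" "length f = Suc (Suc m)" "cls f \<noteq> cls e0" "Z \<noteq> Z'"
        "ends (Suc m) (cls f) = {Z, Z'}" "cls (take m (drop 1 f)) = cls w0"
        using step(2) unfolding SWg_def by blast
      obtain x y where xy: "is_factor u (x # w0 @ [y])" "cls f = cls (x # w0 @ [y])"
        using normalize_np[OF clo f(1,2) f(6)] by blast
      have ZZ: "{Z, Z'} = {gv (x,-1), gv (y,1)}" using f(5) xy(2) ends_w by metis
      have fw: "(x, -1) \<in> V" "(y, 1) \<in> V" "{(x,-1),(y,1)} \<in> Ed" using facts_word[OF xy(1)] by auto
      have ne: "{(x,-1),(y,1)} \<noteq> {vA, vB}"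
      proof
        assume "{(x,-1),(y,1)} = {vA, vB}"
        then have "{(x,-1::int),(y,1)} = {(x0,-1),(y0,1)}" using vAB(3) by simp
        then have "x = x0" "y = y0" by (auto simp: doubleton_eq_iff)
        then show False using f(3) xy(2) e0d by simp
      qed
      show ?case
      proof (cases "Z = gv (x,-1)")
        case True
        then have "v = (x,-1)" using gv_inj v fw by metis
        moreover have "Z' = gv (y,1)" using ZZ True f(4) by (auto simp: doubleton_eq_iff)
        moreover have h2: "?R (x,-1) (y,1)" using fw ne by simp
        moreover have h1: "?R\<^sup>*\<^sup>* vA (x,-1)" using v(3) \<open>v = (x,-1)\<close> by simp
        ultimately have "?R\<^sup>*\<^sup>* vA (y,1)" using rtranclp.rtrancl_into_rtrancl[OF h1 h2] by simp
        then show ?thesis using fw(2) \<open>Z' = gv (y,1)\<close> by blast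
      next
        case False
        then have Zy: "Z = gv (y,1)" "Z' = gv (x,-1)" using ZZ by (auto simp: doubleton_eq_iff)
        then have "v = (y,1)" using gv_inj v fw by metis
        moreover have h2: "?R (y,1) (x,-1)" using fw ne by (simp add: insert_commute)
        moreover have h1: "?R\<^sup>*\<^sup>* vA (y,1)" using v(3) \<open>v = (y,1)\<close> by simp
        ultimately have "?R\<^sup>*\<^sup>* vA (x,-1)" using rtranclp.rtrancl_into_rtrancl[OF h1 h2] by simp
        then show ?thesis using fw(1) Zy by blast
      qed
    qed
  qed
  obtain v where v: "v \<in> V" "B = gv v" "?R\<^sup>*\<^sup>* vA v" using inv path unfolding w0_def by blast
  have "v = vB" using gv_inj v vV vAB by metis
  then have pathR: "?R\<^sup>*\<^sup>* vA vB" using v by simp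
  have edgeAB: "{vA, vB} \<in> Ed" using vAB(3) p0 by simp
  have EV: "\<And>e. e \<in> Ed \<Longrightarrow> e \<subseteq> V"
  proof -
    fix e assume "e \<in> Ed"
    then obtain a b where "e = {(a,-1),(b,1)}" "is_factor u (a # w0 @ [b])"
      unfolding Ed_def' bi_ext_def by auto
    then show "e \<subseteq> V" using facts_word by auto
  qed
  have "has_cycle (V, Ed)" using graph_cycle[OF EV edgeAB vne pathR] .
  then show ?thesis unfolding V_def Ed_def w0_def by simp
qed


lemma inj_left_pal:
  assumes "rev w = w" "cls (x # w) = cls (x' # w)" shows "x = x'"
proof (cases "w = []")
  case True
  then show ?thesis using assms(2) unfolding cls_def by auto
next
  case False
  then show ?thesis using inj_left assms(2) by metis
qed

lemma loc_pal:
  fixes u :: "nat \<Rightarrow> 'a"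
  assumes clo: "closed_under_reversal u" and e0: "is_factor u e0" "length e0 = Suc (Suc m)"
    and AB: "A \<noteq> B" "ends (Suc m) (cls e0) = {A,B}"
    and path: "(SWg u m (cls e0) (cls (take m (drop 1 e0))))\<^sup>*\<^sup>* A B"
    and pw: "palindrome (take m (drop 1 e0))"
  shows "has_cycle (Theta u (take m (drop 1 e0)))"
proof -
  define w0 where "w0 = take m (drop 1 e0)"
  have lw0: "length w0 = m" unfolding w0_def using e0(2) by simp
  have rw: "rev w0 = w0" using pw unfolding w0_def palindrome_def by simp
  define x0 where "x0 = hd e0"
  define y0 where "y0 = last e0"
  have e0d: "e0 = x0 # w0 @ [y0]" unfolding x0_def y0_def w0_def using decomp[OF e0(2)] .
  define V where "V = fst (Theta u w0)"
  define Ed where "Ed = snd (Theta u w0)"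
  define gv where "gv x = cls (x # w0)" for x
  have V_def': "V = right_ext u w0" unfolding V_def Theta_def by simp
  have Ed_def': "Ed = {{a, b} | a b. (a, b) \<in> bi_ext u w0 \<and> a \<noteq> b}" unfolding Ed_def Theta_def by simp
  have gv_inj: "\<And>p q. gv p = gv q \<Longrightarrow> p = q" unfolding gv_def using inj_left_pal[OF rw] by blast
  have facts_word: "\<And>x y. is_factor u (x # w0 @ [y]) \<Longrightarrow> x \<in> V \<and> y \<in> V \<and> (x \<noteq> y \<longrightarrow> {x,y} \<in> Ed)"
  proof -
    fix x y assume h: "is_factor u (x # w0 @ [y])"
    have "is_factor u (x # w0)" using factor_take[OF h, of "Suc m"] lw0 by simp
    then have "is_factor u (w0 @ [x])" using factor_rev[OF clo] rw by fastforce
    moreover have "is_factor u (w0 @ [y])" using factor_drop[OF h, of 1] by simp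
    ultimately show "x \<in> V \<and> y \<in> V \<and> (x \<noteq> y \<longrightarrow> {x,y} \<in> Ed)"
      using h unfolding V_def' Ed_def' right_ext_def bi_ext_def by auto
  qed
  have ends_w: "\<And>x y. ends (Suc m) (cls (x # w0 @ [y])) = {gv x, gv y}"
    unfolding gv_def using ends_word[OF lw0] cls_pal_snoc[OF rw] by simp
  have AB': "{A,B} = {gv x0, gv y0}" using AB(2) ends_w e0d by metis
  obtain vA vB where vAB: "A = gv vA" "B = gv vB" "{vA, vB} = {x0,y0}"
    using AB' by (metis doubleton_eq_iff)
  have vne: "vA \<noteq> vB" using vAB AB(1) by auto
  have p0: "x0 \<in> V" "y0 \<in> V" using facts_word e0(1) e0d by metis+
  have vV: "vA \<in> V" "vB \<in> V" using vAB(3) p0 by (auto simp: doubleton_eq_iff)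
  have edgeAB: "{vA, vB} \<in> Ed" using facts_word[of x0 y0] e0(1) e0d vAB(3) vne
    by (metis doubleton_eq_iff)
  let ?R = "\<lambda>v v'. {v,v'} \<in> Ed \<and> {v,v'} \<noteq> {vA,vB}"
  have inv: "\<And>Z. (SWg u m (cls e0) (cls w0))\<^sup>*\<^sup>* A Z \<Longrightarrow> \<exists>v\<in>V. Z = gv v \<and> ?R\<^sup>*\<^sup>* vA v"
  proof -
    fix Z assume "(SWg u m (cls e0) (cls w0))\<^sup>*\<^sup>* A Z"
    then show "\<exists>v\<in>V. Z = gv v \<and> ?R\<^sup>*\<^sup>* vA v"
    proof (induction rule: rtranclp_induct)
      case base then show ?case using vAB vV by auto
    next
      case (step Z Z')
      then obtain v where v: "v \<in> V" "Z = gv v" "?R\<^sup>*\<^sup>* vA v" by blast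
      obtain f where f: "is_factor u f" "length f = Suc (Suc m)" "cls f \<noteq> cls e0" "Z \<noteq> Z'"
        "ends (Suc m) (cls f) = {Z, Z'}" "cls (take m (drop 1 f)) = cls w0"
        using step(2) unfolding SWg_def by blast
      have mid: "take m (drop 1 f) = w0" using f(6) rw by (auto simp: cls_eq_iff)
      define x where "x = hd f"
      define y where "y = last f"
      have fd: "f = x # w0 @ [y]" using decomp[OF f(2)] mid unfolding x_def y_def by simp
      have ZZ: "{Z, Z'} = {gv x, gv y}" using f(5) fd ends_w by metis
      have xy: "x \<noteq> y" using ZZ f(4) by auto
      have fw: "x \<in> V" "y \<in> V" "{x,y} \<in> Ed" using facts_word[of x y] f(1) fd xy by auto
      have ne: "{x,y} \<noteq> {vA, vB}"
      proof
        assume "{x,y} = {vA, vB}"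
        then have "{x,y} = {x0,y0}" using vAB(3) by simp
        then have "(x = x0 \<and> y = y0) \<or> (x = y0 \<and> y = x0)" by (auto simp: doubleton_eq_iff)
        then have "f = e0 \<or> f = rev e0" using fd e0d rw by auto
        then show False using f(3) by (auto simp: cls_eq_iff)
      qed
      show ?case
      proof (cases "Z = gv x")
        case True
        then have "v = x" using gv_inj v by metis
        moreover have "Z' = gv y" using ZZ True f(4) by (auto simp: doubleton_eq_iff)
        moreover have h2: "?R x y" using fw ne by simp
        moreover have h1: "?R\<^sup>*\<^sup>* vA x" using v(3) \<open>v = x\<close> by simp
        ultimately have "?R\<^sup>*\<^sup>* vA y" using rtranclp.rtrancl_into_rtrancl[OF h1 h2] by simp
        then show ?thesis using fw(2) \<open>Z' = gv y\<close> by blast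
      next
        case False
        then have Zy: "Z = gv y" "Z' = gv x" using ZZ by (auto simp: doubleton_eq_iff)
        then have "v = y" using gv_inj v by metis
        moreover have h2: "?R y x" using fw ne by (simp add: insert_commute)
        moreover have h1: "?R\<^sup>*\<^sup>* vA y" using v(3) \<open>v = y\<close> by simp
        ultimately have "?R\<^sup>*\<^sup>* vA x" using rtranclp.rtrancl_into_rtrancl[OF h1 h2] by simp
        then show ?thesis using fw(1) Zy by blast
      qed
    qed
  qed
  obtain v where v: "v \<in> V" "B = gv v" "?R\<^sup>*\<^sup>* vA v" using inv path unfolding w0_def by blast
  have "v = vB" using gv_inj v vAB by metis
  then have pathR: "?R\<^sup>*\<^sup>* vA vB" using v by simp
  have EV: "\<And>e. e \<in> Ed \<Longrightarrow> e \<subseteq> V"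
  proof -
    fix e assume "e \<in> Ed"
    then obtain a b where "e = {a,b}" "is_factor u (a # w0 @ [b])"
      unfolding Ed_def' bi_ext_def by auto
    then show "e \<subseteq> V" using facts_word by auto
  qed
  have "has_cycle (V, Ed)" using graph_cycle[OF EV edgeAB vne pathR] .
  then show ?thesis unfolding V_def Ed_def w0_def by simp
qed


lemma local_cp:
  assumes clo: "closed_under_reversal u" and e0: "is_factor u e0" "length e0 = Suc (Suc m)"
    and AB: "A \<noteq> B" "ends (Suc m) (cls e0) = {A,B}"
    and path: "(SWg u m (cls e0) (cls (take m (drop 1 e0))))\<^sup>*\<^sup>* A B"
  shows "cycle_property u (take m (drop 1 e0))"
proof -
  have "is_factor u (take m (drop 1 e0))" using e0(1) by (intro factor_take factor_drop)
  then show ?thesis unfolding cycle_property_def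
    using loc_pal[OF clo e0 AB path] loc_nonpal[OF clo e0 AB path] by blast
qed

lemma step3:
  fixes u :: "nat \<Rightarrow> 'a"
  assumes clo: "closed_under_reversal u" and cyc: "cycm u (Suc m)"
  shows "cycm u m \<or> (\<exists>w. cycle_property u w)"
proof -
  obtain e0 A B where e0: "is_factor u e0" "length e0 = Suc (Suc m)" and AB: "A \<noteq> B"
    "ends (Suc m) (cls e0) = {A,B}" and path: "(Sg u (Suc m) (cls e0))\<^sup>*\<^sup>* A B"
    using cyc unfolding cycm_def by (elim exE conjE) blast
  define W where "W = cls (take m (drop 1 e0))"
  obtain xs where xs: "xs \<noteq> []" "hd xs = A" "last xs = B" "distinct xs"
    "successively (Sg u (Suc m) (cls e0)) xs" using rtranclp_spath[OF path] by blast
  show ?thesis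
  proof (cases "successively (SWg u m (cls e0) W) xs")
    case True
    then have "(SWg u m (cls e0) W)\<^sup>*\<^sup>* A B" using successively_rtranclp xs by fastforce
    then have "cycle_property u (take m (drop 1 e0))" using local_cp[OF clo e0 AB] unfolding W_def by blast
    then show ?thesis by blast
  next
    case False
    obtain ys X Y zs where sp: "xs = ys @ X # Y # zs" "successively (SWg u m (cls e0) W) (ys @ [X])"
      "Sg u (Suc m) (cls e0) X Y" "\<not> SWg u m (cls e0) W X Y"
      using successively_split[OF xs(5) False] by blast
    obtain f where f: "is_factor u f" "length f = Suc (Suc m)" "cls f \<noteq> cls e0" "X \<noteq> Y"
      "ends (Suc m) (cls f) = {X, Y}" using sp(3) unfolding Sg_def by blast
    define W1 where "W1 = cls (take m (drop 1 f))"
    have W1W: "W1 \<noteq> W" using sp(4) f unfolding SWg_def W1_def by blast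
    have W1X: "W1 \<in> ends m X" "W1 \<in> ends m Y" using pivot_in_ends[OF f(2)] f(5) unfolding W1_def by auto
    have WX: "W \<in> ends m X"
    proof (cases "ys = []")
      case True
      then have "X = A" using sp(1) xs(2) by simp
      then show ?thesis using pivot_in_ends[OF e0(2)] AB(2) unfolding W_def by auto
    next
      case False
      then have "SWg u m (cls e0) W (last ys) X" using sp(2) by (simp add: successively_append_iff)
      then obtain f' where f': "length f' = Suc (Suc m)" "ends (Suc m) (cls f') = {last ys, X}"
        "cls (take m (drop 1 f')) = W" unfolding SWg_def by blast
      then show ?thesis using pivot_in_ends[OF f'(1), of X] by auto
    qed
    obtain x where x: "X = cls x" "is_factor u x" "length x = Suc m"
      using vertex_word[OF f(1,2)] f(5) by blast
    have endsX: "ends m (cls x) = {W1, W}"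
    proof -
      have "ends m (cls x) = {cls (take m x), cls (drop 1 x)}" using ends_cls[OF x(3)] .
      then show ?thesis using WX W1X(1) W1W x(1) by auto
    qed
    have succ: "successively (Sg u (Suc m) (cls e0)) (Y # zs)"
      using xs(5) sp(1) by (simp add: successively_append_iff)
    have notX: "\<forall>Z\<in>set (Y # zs). Z \<noteq> X" using xs(4) sp(1) by auto
    obtain y where y: "Y = cls y" "is_factor u y" "length y = Suc m"
      using vertex_word[OF f(1,2)] f(5) by blast
    have hdY: "\<forall>c\<in>ends m (hd (Y # zs)). (Sg u m X)\<^sup>*\<^sup>* W1 c"
      using good[OF y(2,3)] y(1) W1X(2) notX by auto
    have "\<forall>c\<in>ends m (last (Y # zs)). (Sg u m X)\<^sup>*\<^sup>* W1 c"
      using reach[OF succ _ notX hdY] by simp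
    moreover have "last (Y # zs) = B" using sp(1) xs(3) by simp
    moreover have "W \<in> ends m B" using pivot_in_ends[OF e0(2)] AB(2) unfolding W_def by auto
    ultimately have "(Sg u m X)\<^sup>*\<^sup>* W1 W" by simp
    then have "cycm u m" unfolding cycm_def using x endsX W1W by blast
    then show ?thesis by blast
  qed
qed

lemma no_cycm0: "\<not> cycm u 0"
  unfolding cycm_def
proof (intro notI, elim exE conjE)
  fix e a b
  assume h: "is_factor u e" "length e = Suc 0" "a \<noteq> b" "ends 0 (cls e) = {a,b}"
    "(Sg u 0 (cls e))\<^sup>*\<^sup>* a b"
  have "ends 0 (cls e) = {cls []}" using ends_cls[of e 0] h(2) by simp
  then have "{a,b} = {cls []}" using h(4) by simp
  then show False using h(3) by blast
qed

lemma cycm_cp: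
  assumes clo: "closed_under_reversal u" shows "cycm u m \<Longrightarrow> \<exists>w. cycle_property u w"
proof (induction m)
  case 0 then show ?case using no_cycm0 by blast
next
  case (Suc m) then show ?case using step3[OF clo] by blast
qed

theorem theorem26:
  fixes u :: "nat \<Rightarrow> 'a::finite"
  assumes "closed_under_reversal u"
    and "pal_defect u > 0"
  shows "(\<exists>q. cycle_property u q)
         \<and> ({q. cycle_property u q} = {[]} \<longrightarrow>
              (\<exists>a r. complete_return_word u [a] r \<and> \<not> palindrome r))"
proof
  obtain P r where h: "palindrome P" "complete_return_word u P r" "\<not> palindrome r"
    using step1[OF assms(2)] by blast
  obtain l where "cycm u l" using step2[OF h] by blast
  then show "\<exists>q. cycle_property u q" using cycm_cp[OF assms(1)] by blast
next
  show "{q. cycle_property u q} = {[]} \<longrightarrow> (\<exists>a r. complete_return_word u [a] r \<and> \<not> palindrome r)"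
  proof
    assume "{q. cycle_property u q} = {[]}"
    then have "cycle_property u []" by auto
    then have "has_cycle (Theta u [])" unfolding cycle_property_def palindrome_def by simp
    then show "\<exists>a r. complete_return_word u [a] r \<and> \<not> palindrome r" by (rule letters_lemma)
  qed
qed

end
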